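(* Let $X$ and $Y$ be non-trivial Banach spaces, $r,s\in(0,1]$, and $\kappa$ a cardinal. If $X$ is $(r,s)$-$\mathrm{SQ}_{<\kappa}$, then $X\oplus_\infty Y$ is $(r,s)$-$\mathrm{SQ}_{<\kappa}$.
   Context: $X\oplus_\infty Y$ is $X\times Y$ with norm $\max\{\|x\|,\|y\|\}$. A Banach space $Z$ is $(r,s)$-$\mathrm{SQ}_{<\kappa}$ if for every set $A\subset S_Z$ with $|A|<\kappa$ there exists $y\in S_Z$ with $\|rx\pm sy\|\le 1$ for all $x\in A$. *)

theory Defs
  imports "HOL-Analysis.Analysis"
begin

text \<open>The unit sphere is the set of vectors of N-norm 1; kappa is a cardinal,
  represented as a cardinal order relation on some type.\<close>
definition SQ_wrt :: "('v::real_vector \<Rightarrow> real) \<Rightarrow> real \<Rightarrow> real \<Rightarrow> 'k rel \<Rightarrow> bool" where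
  "SQ_wrt N r s \<kappa> \<longleftrightarrow>
     (\<forall>A. A \<subseteq> {x. N x = 1} \<and> (card_of A, \<kappa>) \<in> ordLess \<longrightarrow>
        (\<exists>y. N y = 1 \<and> (\<forall>x\<in>A. N (r *\<^sub>R x + s *\<^sub>R y) \<le> 1 \<and> N (r *\<^sub>R x - s *\<^sub>R y) \<le> 1)))"

definition SQ :: "'v::real_normed_vector itself \<Rightarrow> real \<Rightarrow> real \<Rightarrow> 'k rel \<Rightarrow> bool" where
  "SQ _ r s \<kappa> \<longleftrightarrow> SQ_wrt (norm :: 'v \<Rightarrow> real) r s \<kappa>"

definition linf_norm :: "('a::real_normed_vector \<times> 'b::real_normed_vector) \<Rightarrow> real" where
  "linf_norm z = max (norm (fst z)) (norm (snd z))"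

end

theory Submission
  imports Defs
begin

lemma comb_bound:
  fixes a u :: "'a::real_normed_vector"
  assumes "norm (r *\<^sub>R a + s *\<^sub>R u) \<le> 1" "norm u = 1" "0 \<le> t" "t \<le> 1" "0 < s" "s \<le> 1"
  shows "norm (r *\<^sub>R (t *\<^sub>R a) + s *\<^sub>R u) \<le> 1"
proof -
  have e: "r *\<^sub>R (t *\<^sub>R a) + s *\<^sub>R u = t *\<^sub>R (r *\<^sub>R a + s *\<^sub>R u) + ((1 - t) * s) *\<^sub>R u"
    by (simp add: algebra_simps)
  have "norm (t *\<^sub>R (r *\<^sub>R a + s *\<^sub>R u) + ((1 - t) * s) *\<^sub>R u)
        \<le> norm (t *\<^sub>R (r *\<^sub>R a + s *\<^sub>R u)) + norm (((1 - t) * s) *\<^sub>R u)"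
    by (rule norm_triangle_ineq)
  also have "\<dots> = t * norm (r *\<^sub>R a + s *\<^sub>R u) + (1 - t) * s"
    using assms by simp
  also have "\<dots> \<le> t * 1 + (1 - t) * 1"
    using assms by (intro add_mono mult_left_mono) auto
  finally show ?thesis using e by simp
qed

theorem proposition6p6:
  fixes r s :: real and \<kappa> :: "'k rel"
  assumes "Card_order \<kappa>"
    and "\<exists>x::'a::banach. x \<noteq> 0"
    and "\<exists>y::'b::banach. y \<noteq> 0"
    and "0 < r" "r \<le> 1" "0 < s" "s \<le> 1"
    and "SQ TYPE('a) r s \<kappa>"
  shows "SQ_wrt (linf_norm :: 'a \<times> 'b \<Rightarrow> real) r s \<kappa>"
  unfolding SQ_wrt_def
proof (intro allI impI)
  fix A :: "('a \<times> 'b) set"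
  assume H: "A \<subseteq> {x. linf_norm x = 1} \<and> (card_of A, \<kappa>) \<in> ordLess"
  define f where "f = (\<lambda>z::'a \<times> 'b. sgn (fst z))"
  define A' where "A' = f ` {z \<in> A. fst z \<noteq> 0}"
  have "(card_of A', card_of {z \<in> A. fst z \<noteq> 0}) \<in> ordLeq" unfolding A'_def by (rule card_of_image)
  moreover have "(card_of {z \<in> A. fst z \<noteq> 0}, card_of A) \<in> ordLeq" by (rule card_of_mono1) auto
  ultimately have "(card_of A', card_of A) \<in> ordLeq" using ordLeq_transitive by blast
  hence c: "(card_of A', \<kappa>) \<in> ordLess" using H ordLeq_ordLess_trans by blast
  have s: "A' \<subseteq> {x. norm x = 1}" unfolding A'_def f_def by (auto simp: norm_sgn)
  from assms(8) obtain u :: 'a where u: "norm u = 1"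
    "\<forall>x\<in>A'. norm (r *\<^sub>R x + s *\<^sub>R u) \<le> 1 \<and> norm (r *\<^sub>R x - s *\<^sub>R u) \<le> 1"
    unfolding SQ_def SQ_wrt_def using s c by blast
  show "\<exists>y. linf_norm y = 1 \<and> (\<forall>x\<in>A. linf_norm (r *\<^sub>R x + s *\<^sub>R y) \<le> 1 \<and> linf_norm (r *\<^sub>R x - s *\<^sub>R y) \<le> 1)"
  proof (intro exI[of _ "(u, 0)"] conjI ballI)
    show "linf_norm (u, 0::'b) = 1" using u by (simp add: linf_norm_def)
  next
    fix x assume xA: "x \<in> A"
    obtain x1 x2 where xx: "x = (x1, x2)" by fastforce
    have n: "norm x1 \<le> 1" "norm x2 \<le> 1" using H xA xx by (auto simp: linf_norm_def max_def split: if_splits)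
    have r2: "norm (r *\<^sub>R x2) \<le> 1" using n assms(4,5)
      by (simp add: mult_le_one)
    have both: "norm (r *\<^sub>R x1 + s *\<^sub>R u) \<le> 1 \<and> norm (r *\<^sub>R x1 - s *\<^sub>R u) \<le> 1"
    proof (cases "x1 = 0")
      case True thus ?thesis using u assms by simp
    next
      case False
      have inA: "sgn x1 \<in> A'" unfolding A'_def f_def using xA xx False by force
      have x1e: "x1 = norm x1 *\<^sub>R sgn x1" using False by (simp add: sgn_div_norm)
      have p: "norm (r *\<^sub>R (norm x1 *\<^sub>R sgn x1) + s *\<^sub>R u) \<le> 1"
        by (rule comb_bound) (use u inA n assms in auto)
      have m: "norm (r *\<^sub>R (norm x1 *\<^sub>R sgn x1) + s *\<^sub>R (-u)) \<le> 1"
        by (rule comb_bound) (use u inA n assms in auto)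
      show ?thesis using p m x1e by (metis scaleR_minus_right diff_conv_add_uminus)
    qed
    show "linf_norm (r *\<^sub>R x + s *\<^sub>R (u, 0::'b)) \<le> 1"
      using both r2 xx by (simp add: linf_norm_def)
    show "linf_norm (r *\<^sub>R x - s *\<^sub>R (u, 0::'b)) \<le> 1"
      using both r2 xx by (simp add: linf_norm_def)
  qed
qed

end
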